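(* Let $\phi:\mathbb{R}^n\to[-\infty,\infty]$ be a proper nearly convex function, $\Theta\subset\mathbb{R}^n$ a nearly convex set, and $G:\mathbb{R}^n\rightrightarrows\mathbb{R}^q$ a nearly convex set-valued mapping. Suppose $$\operatorname{ri}(\operatorname{dom}\phi)\cap\operatorname{ri}(\operatorname{dom} G)\cap\operatorname{ri}\Theta\neq\emptyset\quad\text{and}\quad 0\in\operatorname{ri}\big(G(\Theta\cap\operatorname{dom}\phi)\big).$$ For $u^*\in\mathbb{R}^n$, $y^*\in\mathbb{R}^q$ let $v_G(x,y^* )=\inf\{\langle -y^*,y\rangle:y\in G(x)\}$ and $h_1(u^*,y^* )=-\phi^*(u^* )+\inf\{\langle u^*,x\rangle+v_G(x,y^* ):x\in\Theta\}$, the infimum understood as $\inf\{\langle u^*,x\rangle-\langle y^*,y\rangle:x\in\Theta,\ y\in G(x)\}$. Then $\mathcal{V}=\mathcal{V}_d$, where $\mathcal{V}=\inf\{\phi(x):x\in\Theta,\ 0\in G(x)\}$ and $\mathcal{V}_d=\sup\{h_1(u^*,y^* ):u^*\in\mathbb{R}^n,\ y^*\in\mathbb{R}^q\}$.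
   Context: A set $\Omega$ is nearly convex if there is a convex set $C$ with $C\subset\Omega\subset\overline{C}$; $\operatorname{ri}\Omega=\{a\in\Omega:\exists\delta>0,\ B(a;\delta)\cap\operatorname{aff}\Omega\subset\Omega\}$. A function is nearly convex if its epigraph is nearly convex, proper if its domain $\{\phi<\infty\}$ is nonempty and $\phi>-\infty$. Fenchel conjugate $\phi^*(u^* )=\sup_z\{\langle u^*,z\rangle-\phi(z)\}$. For $G:\mathbb{R}^n\rightrightarrows\mathbb{R}^q$: $\operatorname{dom}G=\{x:G(x)\neq\emptyset\}$, $G$ nearly convex if $\operatorname{gph}G=\{(x,y):y\in G(x)\}$ is; $G(S)=\bigcup_{x\in S}G(x)$. Convention $\inf\emptyset=\infty$. *)

theory Defs
  imports "HOL-Analysis.Analysis"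
begin

definition nearly_convex :: "'a::real_normed_vector set \<Rightarrow> bool" where
  "nearly_convex \<Omega> \<longleftrightarrow> (\<exists>C. convex C \<and> C \<subseteq> \<Omega> \<and> \<Omega> \<subseteq> closure C)"

definition ri :: "'a::euclidean_space set \<Rightarrow> 'a set" where
  "ri \<Omega> = {a \<in> \<Omega>. \<exists>\<delta>>0. ball a \<delta> \<inter> affine hull \<Omega> \<subseteq> \<Omega>}"

definition epi :: "('a \<Rightarrow> ereal) \<Rightarrow> ('a \<times> real) set" where
  "epi \<phi> = {(x, t). \<phi> x \<le> ereal t}"

definition edom :: "('a \<Rightarrow> ereal) \<Rightarrow> 'a set" where
  "edom \<phi> = {x. \<phi> x < \<infinity>}"

definition proper_fun :: "('a \<Rightarrow> ereal) \<Rightarrow> bool" where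
  "proper_fun \<phi> \<longleftrightarrow> edom \<phi> \<noteq> {} \<and> (\<forall>x. \<phi> x > -\<infinity>)"

definition nearly_convex_fun :: "('a::real_normed_vector \<Rightarrow> ereal) \<Rightarrow> bool" where
  "nearly_convex_fun \<phi> \<longleftrightarrow> nearly_convex (epi \<phi>)"

definition fconj :: "('a::real_inner \<Rightarrow> ereal) \<Rightarrow> 'a \<Rightarrow> ereal" where
  "fconj \<phi> u = (SUP z. ereal (u \<bullet> z) - \<phi> z)"

definition gph :: "('a \<Rightarrow> 'b set) \<Rightarrow> ('a \<times> 'b) set" where
  "gph G = {(x, y). y \<in> G x}"

definition sdom :: "('a \<Rightarrow> 'b set) \<Rightarrow> 'a set" where
  "sdom G = {x. G x \<noteq> {}}"

definition nearly_convex_map :: "('a::real_normed_vector \<Rightarrow> 'b::real_normed_vector set) \<Rightarrow> bool" where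
  "nearly_convex_map G \<longleftrightarrow> nearly_convex (gph G)"

definition simage :: "('a \<Rightarrow> 'b set) \<Rightarrow> 'a set \<Rightarrow> 'b set" where
  "simage G S = (\<Union>x\<in>S. G x)"

definition h1 :: "('a::real_inner \<Rightarrow> ereal) \<Rightarrow> 'a set \<Rightarrow> ('a \<Rightarrow> 'b::real_inner set)
    \<Rightarrow> 'a \<Rightarrow> 'b \<Rightarrow> ereal" where
  "h1 \<phi> \<Theta> G u y' = - fconj \<phi> u +
     (INF p \<in> {(x, y). x \<in> \<Theta> \<and> y \<in> G x}. ereal (u \<bullet> fst p - y' \<bullet> snd p))"

end

theory Submission
  imports Defs
begin

lemma ri_eq: "ri \<Omega> = rel_interior \<Omega>"
  unfolding ri_def by (auto simp: mem_rel_interior_ball)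

lemma sandwich_ri:
  fixes \<Omega> C :: "'n::euclidean_space set"
  assumes "convex C" "C \<subseteq> \<Omega>" "\<Omega> \<subseteq> closure C"
  shows "rel_interior \<Omega> = rel_interior C"
proof -
  have "affine hull C \<subseteq> affine hull \<Omega>" using assms(2) by (simp add: hull_mono)
  moreover have "affine hull \<Omega> \<subseteq> affine hull (closure C)" using assms(3) by (rule hull_mono)
  ultimately have ah: "affine hull \<Omega> = affine hull C" by simp
  have "rel_interior C \<subseteq> rel_interior \<Omega>" using subset_rel_interior[OF assms(2)] ah by simp
  moreover have "rel_interior \<Omega> \<subseteq> rel_interior (closure C)"
    using subset_rel_interior[OF assms(3)] ah by simp
  ultimately show ?thesis using convex_rel_interior_closure[OF assms(1)] by simp
qed

lemma sandwich_lin: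
  fixes f :: "'m::euclidean_space \<Rightarrow> 'n::euclidean_space"
  assumes "linear f" "convex C" "C \<subseteq> \<Omega>" "\<Omega> \<subseteq> closure C"
  shows "rel_interior (f ` \<Omega>) = f ` rel_interior C"
proof -
  have "f ` C \<subseteq> f ` \<Omega>" using assms by auto
  moreover have "f ` \<Omega> \<subseteq> closure (f ` C)"
    using closure_linear_image_subset[OF assms(1), of C] assms(4) by auto
  ultimately have "rel_interior (f ` \<Omega>) = rel_interior (f ` C)"
    using sandwich_ri convex_linear_image[OF assms(1,2)] by blast
  thus ?thesis using rel_interior_convex_linear_image assms by metis
qed

lemma sandwich_ri2:
  fixes \<Omega> C :: "'n::euclidean_space set"
  assumes "convex C" "C \<subseteq> \<Omega>" "\<Omega> \<subseteq> closure C"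
  shows "ri \<Omega> = rel_interior C"
  using sandwich_ri[OF assms] by (simp add: ri_eq)

theorem theorem7p6:
  fixes \<phi> :: "'a::euclidean_space \<Rightarrow> ereal"
    and \<Theta> :: "'a set"
    and G :: "'a \<Rightarrow> 'b::euclidean_space set"
  assumes "proper_fun \<phi>" and "nearly_convex_fun \<phi>"
    and "nearly_convex \<Theta>" and "nearly_convex_map G"
    and "ri (edom \<phi>) \<inter> ri (sdom G) \<inter> ri \<Theta> \<noteq> {}"
    and "0 \<in> ri (simage G (\<Theta> \<inter> edom \<phi>))"
  shows "(INF x \<in> {x \<in> \<Theta>. 0 \<in> G x}. \<phi> x) = (SUP p \<in> UNIV. h1 \<phi> \<Theta> G (fst p) (snd p))"
proof -
  obtain CE where CE: "convex CE" "CE \<subseteq> epi \<phi>" "epi \<phi> \<subseteq> closure CE"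
    using assms(2) unfolding nearly_convex_fun_def nearly_convex_def by blast
  obtain CT where CT: "convex CT" "CT \<subseteq> \<Theta>" "\<Theta> \<subseteq> closure CT"
    using assms(3) unfolding nearly_convex_def by blast
  obtain CG where CG: "convex CG" "CG \<subseteq> gph G" "gph G \<subseteq> closure CG"
    using assms(4) unfolding nearly_convex_map_def nearly_convex_def by blast
  have pinf: "\<And>x. \<phi> x > -\<infinity>" using assms(1) unfolding proper_fun_def by blast
  have Deq: "edom \<phi> = fst ` epi \<phi>"
  proof (rule set_eqI)
    fix x
    show "x \<in> edom \<phi> \<longleftrightarrow> x \<in> fst ` epi \<phi>"
    proof
      assume "x \<in> edom \<phi>"
      then have "\<phi> x < \<infinity>" by (simp add: edom_def)
      then obtain t where "\<phi> x = ereal t" using pinf[of x] by (cases "\<phi> x") auto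
      then have "(x, t) \<in> epi \<phi>" by (simp add: epi_def)
      then show "x \<in> fst ` epi \<phi>" by force
    next
      assume "x \<in> fst ` epi \<phi>"
      then obtain t where "\<phi> x \<le> ereal t" by (auto simp: epi_def)
      then show "x \<in> edom \<phi>" by (auto simp: edom_def le_less_trans)
    qed
  qed
  have sdeq: "sdom G = fst ` gph G" by (force simp: sdom_def gph_def)
  define CD where "CD = fst ` CE"
  have CDc: "convex CD" unfolding CD_def by (rule convex_linear_image[OF linear_fst CE(1)])
  have CDsub: "CD \<subseteq> edom \<phi>" using CE(2) Deq CD_def by auto
  have CDcl: "edom \<phi> \<subseteq> closure CD"
    using CE(3) Deq closure_linear_image_subset[OF linear_fst, of CE] CD_def by auto
  have riD: "ri (edom \<phi>) = rel_interior CD" by (rule sandwich_ri2[OF CDc CDsub CDcl])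
  have riT: "ri \<Theta> = rel_interior CT" by (rule sandwich_ri2[OF CT])
  have riG: "ri (sdom G) = fst ` rel_interior CG"
    unfolding sdeq ri_eq by (rule sandwich_lin[OF linear_fst CG])
  have riCD: "rel_interior CD = fst ` rel_interior CE"
    unfolding CD_def using rel_interior_convex_linear_image[OF linear_fst CE(1)] by simp
  obtain x0 y0 where x0: "x0 \<in> rel_interior CD" "x0 \<in> rel_interior CT" "(x0, y0) \<in> rel_interior CG"
    using assms(5) riD riT riG by force
  define CTD where "CTD = CT \<inter> CD"
  have ne1: "rel_interior CT \<inter> rel_interior CD \<noteq> {}" using x0 by blast
  have CTDc: "convex CTD" using CT(1) CDc CTD_def by (simp add: convex_Int)
  have riCTD: "rel_interior CTD = rel_interior CT \<inter> rel_interior CD"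
    unfolding CTD_def by (rule convex_rel_interior_inter_two[OF CT(1) CDc ne1])
  have clCTD: "closure CTD = closure CT \<inter> closure CD"
    unfolding CTD_def by (rule closure_Int_convex[OF CT(1) CDc ne1])
  have CTDU: "convex (CTD \<times> (UNIV::'b set))" using CTDc by (simp add: convex_Times)
  have riCTDU: "rel_interior (CTD \<times> (UNIV::'b set)) = rel_interior CTD \<times> UNIV"
    using rel_interior_Times[OF CTDc convex_UNIV] by simp
  have ne2: "rel_interior CG \<inter> rel_interior (CTD \<times> (UNIV::'b set)) \<noteq> {}"
    using x0 riCTDU riCTD by blast
  define X where "X = CG \<inter> (CTD \<times> (UNIV::'b set))"
  have Xc: "convex X" unfolding X_def using CG(1) CTDU by (simp add: convex_Int)
  have riX: "rel_interior X = rel_interior CG \<inter> (rel_interior CTD \<times> UNIV)"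
    unfolding X_def using convex_rel_interior_inter_two[OF CG(1) CTDU ne2] riCTDU by simp
  have clX: "closure X = closure CG \<inter> (closure CTD \<times> UNIV)"
    unfolding X_def using closure_Int_convex[OF CG(1) CTDU ne2] by (simp add: closure_Times)
  have simeq: "simage G (\<Theta> \<inter> edom \<phi>) = snd ` (gph G \<inter> ((\<Theta> \<inter> edom \<phi>) \<times> UNIV))"
    by (force simp: simage_def gph_def)
  have "X \<subseteq> gph G \<inter> ((\<Theta> \<inter> edom \<phi>) \<times> UNIV)"
    using CG(2) CT(2) CDsub unfolding X_def CTD_def by auto
  moreover have "gph G \<inter> ((\<Theta> \<inter> edom \<phi>) \<times> UNIV) \<subseteq> closure X"
    using CG(3) CT(3) CDcl unfolding clX clCTD by auto
  ultimately have "ri (simage G (\<Theta> \<inter> edom \<phi>)) = snd ` rel_interior X"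
    unfolding simeq ri_eq by (rule sandwich_lin[OF linear_snd Xc])
  then obtain x1 where x1: "(x1, 0) \<in> rel_interior CG" "x1 \<in> rel_interior CT" "x1 \<in> rel_interior CD"
    using assms(6) riX riCTD by force
  then obtain t1 where t1: "(x1, t1) \<in> rel_interior CE" using riCD by force

  have x1T: "x1 \<in> \<Theta>" using x1(2) CT(2) rel_interior_subset by blast
  have x1G: "0 \<in> G x1" using x1(1) CG(2) rel_interior_subset by (force simp: gph_def)
  have x1D: "x1 \<in> edom \<phi>" using x1(3) CDsub rel_interior_subset by blast
  have t1E: "\<phi> x1 \<le> ereal t1" using t1 CE(2) rel_interior_subset by (force simp: epi_def)
  define V where "V = (INF x \<in> {x \<in> \<Theta>. 0 \<in> G x}. \<phi> x)"
  have weak: "(SUP p \<in> UNIV. h1 \<phi> \<Theta> G (fst p) (snd p)) \<le> V"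
    unfolding V_def
  proof (intro SUP_least INF_greatest)
    fix p :: "'a \<times> 'b" and x assume "x \<in> {x \<in> \<Theta>. 0 \<in> G x}"
    then have xT: "x \<in> \<Theta>" and xG: "0 \<in> G x" by auto
    obtain u ys where p: "p = (u, ys)" by (cases p)
    show "h1 \<phi> \<Theta> G (fst p) (snd p) \<le> \<phi> x"
    proof (cases "\<phi> x = \<infinity>")
      case True then show ?thesis by simp
    next
      case False
      then obtain t where t: "\<phi> x = ereal t" using pinf[of x] by (cases "\<phi> x") auto
      have "ereal (u \<bullet> x) - \<phi> x \<le> fconj \<phi> u" unfolding fconj_def by (rule SUP_upper) simp
      then have f: "ereal (u \<bullet> x - t) \<le> fconj \<phi> u" using t by simp
      have I: "(INF p \<in> {(x, y). x \<in> \<Theta> \<and> y \<in> G x}. ereal (u \<bullet> fst p - ys \<bullet> snd p)) \<le> ereal (u \<bullet> x)"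
        using INF_lower[of "(x, 0)" "{(x, y). x \<in> \<Theta> \<and> y \<in> G x}" "\<lambda>p. ereal (u \<bullet> fst p - ys \<bullet> snd p)"] xT xG
        by simp
      have "- fconj \<phi> u \<le> ereal (t - u \<bullet> x)" using f
        by (metis ereal_minus(1) ereal_uminus_le_reorder minus_diff_eq uminus_ereal.simps(1))
      then have "h1 \<phi> \<Theta> G u ys \<le> ereal (t - u \<bullet> x) + ereal (u \<bullet> x)"
        unfolding h1_def using I by (rule add_mono)
      then show ?thesis using t p by simp
    qed
  qed
  have "V \<le> \<phi> x1" unfolding V_def using x1T x1G by (intro INF_lower) auto
  then have Vlt: "V < \<infinity>" using x1D by (auto simp: edom_def)
  have strong: "V \<le> (SUP p \<in> UNIV. h1 \<phi> \<Theta> G (fst p) (snd p))"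
  proof (cases "V = -\<infinity>")
    case True then show ?thesis by simp
  next
    case False
    then obtain v where Vv: "V = ereal v" using Vlt by (cases V) auto
    have vle: "\<And>x. x \<in> \<Theta> \<Longrightarrow> 0 \<in> G x \<Longrightarrow> ereal v \<le> \<phi> x"
      unfolding Vv[symmetric] V_def by (intro INF_lower) auto
    define Y where "Y = CG \<inter> (CT \<times> (UNIV::'b set))"
    have CTU: "convex (CT \<times> (UNIV::'b set))" using CT(1) by (simp add: convex_Times)
    have riCTU: "rel_interior (CT \<times> (UNIV::'b set)) = rel_interior CT \<times> UNIV"
      using rel_interior_Times[OF CT(1) convex_UNIV] by simp
    have ne3: "rel_interior CG \<inter> rel_interior (CT \<times> (UNIV::'b set)) \<noteq> {}"
      using x1 riCTU by blast
    have Yc: "convex Y" unfolding Y_def using CG(1) CTU by (simp add: convex_Int)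
    have clY: "closure Y = closure CG \<inter> (closure CT \<times> UNIV)"
      unfolding Y_def using closure_Int_convex[OF CG(1) CTU ne3] by (simp add: closure_Times)
    have riY: "rel_interior Y = rel_interior CG \<inter> (rel_interior CT \<times> UNIV)"
      unfolding Y_def using convex_rel_interior_inter_two[OF CG(1) CTU ne3] riCTU by simp
    define S0 where "S0 = CE \<times> Y"
    have S0c: "convex S0" unfolding S0_def using CE(1) Yc by (simp add: convex_Times)
    have riS0: "rel_interior S0 = rel_interior CE \<times> rel_interior Y"
      unfolding S0_def by (rule rel_interior_Times[OF CE(1) Yc])
    have clS0: "closure S0 = closure CE \<times> closure Y" unfolding S0_def by (simp add: closure_Times)
    define M :: "((('a \<times> real) \<times> ('a \<times> 'b)) \<times> real) \<Rightarrow> (('a \<times> 'b) \<times> real)" where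
      "M = (\<lambda>q. ((fst (snd (fst q)) - fst (fst (fst q)), snd (snd (fst q))), snd (fst (fst q)) + snd q))"
    have linM: "linear M" unfolding linear_iff M_def by (auto simp: algebra_simps)
    have Mapp: "\<And>z t x y s. M (((z, t), (x, y)), s) = ((x - z, y), t + s)" by (simp add: M_def)
    define P where "P = S0 \<times> {0::real<..}"
    have Pc: "convex P" unfolding P_def using S0c by (simp add: convex_Times)
    have riP: "rel_interior P = rel_interior S0 \<times> {0<..}"
      unfolding P_def using rel_interior_Times[OF S0c convex_real_interval(3)] by (simp add: rel_interior_open)
    have clP: "closure P = closure S0 \<times> {0..}" unfolding P_def by (simp add: closure_Times)
    define A where "A = M ` P"
    have Ac: "convex A" unfolding A_def by (rule convex_linear_image[OF linM Pc])
    have riA: "rel_interior A = M ` rel_interior P"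
      unfolding A_def using rel_interior_convex_linear_image[OF linM Pc] by simp
    have clA: "M ` closure P \<subseteq> closure A"
      unfolding A_def by (rule closure_linear_image_subset[OF linM])
    have memA: "((x - z, y), t + s) \<in> closure A"
      if "\<phi> z \<le> ereal t" "x \<in> \<Theta>" "y \<in> G x" "s \<ge> 0" for z t x y s
    proof -
      have "(z, t) \<in> closure CE" using that CE(3) by (auto simp: epi_def)
      moreover have "(x, y) \<in> closure Y" using that CG(3) CT(3) unfolding clY by (auto simp: gph_def)
      ultimately have "(((z, t), (x, y)), s) \<in> closure P" using that unfolding clP clS0 by auto
      then show ?thesis using clA Mapp by (metis image_subset_iff)
    qed
    define p where "p = (((0::'a), (0::'b)), v)"
    have pA: "p \<notin> A"
    proof
      assume "p \<in> A"
      then obtain z t x y s where q: "(z, t) \<in> CE" "(x, y) \<in> CG" "x \<in> CT" "s > 0"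
        and eq: "p = ((x - z, y), t + s)"
        unfolding A_def P_def S0_def Y_def by (force simp: M_def)
      have "x = z" "y = 0" "t = v - s" using eq by (auto simp: p_def)
      moreover have "\<phi> z \<le> ereal t" using q(1) CE(2) by (auto simp: epi_def)
      moreover have "z \<in> \<Theta>" "0 \<in> G z" using q(2,3) CT(2) CG(2) \<open>x = z\<close> \<open>y = 0\<close> by (auto simp: gph_def)
      ultimately have "ereal v \<le> ereal (v - s)" using vle by (meson order_trans)
      then show False using q(4) by simp
    qed
    then have pri: "p \<notin> rel_interior A" using rel_interior_subset by blast
    have pcl: "p \<in> closure A"
    proof -
      have "\<exists>q\<in>closure A. dist q p < e" if e: "e > 0" for e
      proof -
        have "V < ereal (v + e)" using Vv e by simp
        then obtain x where x: "x \<in> \<Theta>" "0 \<in> G x" "\<phi> x < ereal (v + e)"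
          unfolding V_def by (auto simp: INF_less_iff)
        have "ereal v \<le> \<phi> x" using vle x by blast
        then obtain t where t: "\<phi> x = ereal t" using x(3) by (cases "\<phi> x") auto
        have q: "((x - x, 0), t + 0) \<in> closure A" using memA[of x t x 0 0] t x by simp
        have "v \<le> t" "t < v + e" using t x(3) \<open>ereal v \<le> \<phi> x\<close> by auto
        then have "dist ((x - x, 0::'b), t + 0) p < e"
          by (simp add: p_def dist_Pair_Pair dist_real_def)
        then show ?thesis using q by blast
      qed
      then have "p \<in> closure (closure A)" unfolding closure_approachable by blast
      then show ?thesis by simp
    qed
    obtain a where a: "a \<noteq> 0" "\<And>y. y \<in> closure A \<Longrightarrow> a \<bullet> p \<le> a \<bullet> y"
      "\<And>y. y \<in> rel_interior A \<Longrightarrow> a \<bullet> p < a \<bullet> y"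
      using supporting_hyperplane_relative_frontier[OF Ac pcl pri] by blast
    define w where "w = fst a"
    define c where "c = snd a"
    have innerP: "\<And>q. a \<bullet> q = w \<bullet> fst q + c * snd q"
      unfolding w_def c_def by (metis inner_Pair inner_real_def prod.collapse)
    have w00: "w \<bullet> ((0::'a), (0::'b)) = 0" by (metis inner_zero_right zero_prod_def)
    have ap: "a \<bullet> p = c * v" by (simp add: innerP p_def w00)
    have ineq: "\<And>m t. (m, t) \<in> closure A \<Longrightarrow> c * v \<le> w \<bullet> m + c * t"
      using a(2) ap innerP by (metis fst_conv snd_conv)
    have q1: "(((x1, t1), (x1, 0::'b)), 1::real) \<in> rel_interior P"
      unfolding riP riS0 riY using t1 x1 by auto
    have "((x1 - x1, 0::'b), t1 + 1) \<in> rel_interior A" unfolding riA using q1 Mapp by (metis image_eqI)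
    then have strict: "c * v < c * (t1 + 1)" using a(3) ap innerP w00 by fastforce
    have c0: "c > 0"
    proof (rule ccontr)
      assume "\<not> c > 0"
      moreover have "c \<noteq> 0" using strict by auto
      ultimately have cn: "c < 0" by simp
      define s where "s = \<bar>v - t1\<bar> + 1"
      have "((x1 - x1, 0::'b), t1 + s) \<in> closure A"
        using memA[OF t1E x1T x1G] s_def by simp
      then have "c * v \<le> c * (t1 + s)" using ineq w00 by fastforce
      moreover have "t1 + s > v" unfolding s_def by linarith
      ultimately show False using cn by (simp add: mult_less_cancel_left_neg not_le[symmetric])
    qed
    define u where "u = (1 / c) *\<^sub>R fst w"
    define ys where "ys = - (1 / c) *\<^sub>R snd w"
    have key: "ereal (u \<bullet> z - t + v) \<le> ereal (u \<bullet> x - ys \<bullet> y)"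
      if "\<phi> z = ereal t" "x \<in> \<Theta>" "y \<in> G x" for z t x y
    proof -
      have "((x - z, y), t + 0) \<in> closure A" using memA[of z t x y 0] that by simp
      then have "c * v \<le> w \<bullet> (x - z, y) + c * t" using ineq by fastforce
      then have "c * v \<le> fst w \<bullet> (x - z) + snd w \<bullet> y + c * t"
        by (metis inner_Pair prod.collapse)
      then have "v \<le> (fst w \<bullet> (x - z) + snd w \<bullet> y) / c + t"
        using c0 by (simp add: field_simps)
      then show ?thesis using c0
        by (simp add: u_def ys_def inner_diff_right add_divide_distrib diff_divide_distrib)
    qed
    define I where "I = (INF p \<in> {(x, y). x \<in> \<Theta> \<and> y \<in> G x}. ereal (u \<bullet> fst p - ys \<bullet> snd p))"
    have Iup: "I \<le> ereal (u \<bullet> x1 - ys \<bullet> 0)" unfolding I_def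
      using INF_lower[of "(x1, 0)" "{(x, y). x \<in> \<Theta> \<and> y \<in> G x}" "\<lambda>p. ereal (u \<bullet> fst p - ys \<bullet> snd p)"] x1T x1G
      by simp
    have Ilow: "ereal (u \<bullet> z - t + v) \<le> I" if "\<phi> z = ereal t" for z t
      unfolding I_def using key[OF that] by (intro INF_greatest) auto
    obtain t1' where t1': "\<phi> x1 = ereal t1'" using x1D pinf[of x1] by (cases "\<phi> x1") (auto simp: edom_def)
    obtain r where r: "I = ereal r" using Iup Ilow[OF t1'] by (cases I) auto
    have fle: "fconj \<phi> u \<le> ereal (r - v)" unfolding fconj_def
    proof (rule SUP_least)
      fix z
      show "ereal (u \<bullet> z) - \<phi> z \<le> ereal (r - v)"
      proof (cases "\<phi> z")
        case (real t) then show ?thesis using Ilow[OF real] r by simp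
      next
        case PInf then show ?thesis by simp
      next
        case MInf then show ?thesis using pinf[of z] by simp
      qed
    qed
    have fge: "ereal (u \<bullet> x1) - \<phi> x1 \<le> fconj \<phi> u" unfolding fconj_def by (rule SUP_upper) simp
    obtain f where f: "fconj \<phi> u = ereal f" using fle fge t1' by (cases "fconj \<phi> u") auto
    have "ereal v \<le> h1 \<phi> \<Theta> G u ys" unfolding h1_def using I_def[symmetric] r f fle by simp
    also have "\<dots> \<le> (SUP p \<in> UNIV. h1 \<phi> \<Theta> G (fst p) (snd p))"
      using SUP_upper[of "(u, ys)" UNIV "\<lambda>p. h1 \<phi> \<Theta> G (fst p) (snd p)"] by simp
    finally show ?thesis using Vv by simp
  qed
  show ?thesis using weak strong V_def by (simp add: antisym)
qed

end
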